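(* Consider a time window $W$ between two consecutive rebuilds of an ordered linear probing hash table. If an insertion $u$ in $W$ hashes to position $i$, then it takes time $O(o_i+s_i+d_u+1)$. If a query or deletion $u$ in $W$ hashes to position $i$, then it takes time $O(o_i+s_i+1)$.
   Context: Ordered linear probing with tombstones: slots $1,\dots,n$, each holding a key, tombstone, or free; a tombstone's hash is that of the deleted key; entries in each maximal run of non-free slots are stored in hash order. A query for $u$ scans $h(u),h(u)+1,\dots$ until finding $u$, an entry with hash greater than $h(u)$, or a free slot; a deletion performs the query and replaces $u$ by a tombstone; an insertion places $u$ at its hash-order position and shifts subsequent entries right by one until reaching a tombstone or free slot, which it uses. Time = number of slots examined/moved. The peak $p_u$ of an insertion is the hash of the tombstone it uses, or the position of the free slot it uses; its displacement is $d_u=p_u-h(u)$. The positional offset $o_i$ is $j-i$ where $j\ge i$ is the largest position such that at the end of $W$ all positions in $[i,j-1]$ contain keys/tombstones with hashes smaller than $i$. The spillover $s_i$ is the largest $k\ge0$ such that, among all keys that are present at the start of $W$ or inserted during $W$, at least $4k$ have hashes in $[i,i+k)$. *)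

theory Defs
  imports Main
begin

text \<open>A tombstone remembers the deleted key, so its hash is the hash of that key.\<close>

datatype 'k slot = Free | Key 'k | Tomb 'k

datatype 'k op = Ins 'k | Del 'k | Qry 'k

type_synonym 'k table = "nat \<Rightarrow> 'k slot"

fun slot_hash :: "('k \<Rightarrow> nat) \<Rightarrow> 'k slot \<Rightarrow> nat" where
  "slot_hash h Free = 0"
| "slot_hash h (Key k) = h k"
| "slot_hash h (Tomb k) = h k"

fun is_tomb :: "'k slot \<Rightarrow> bool" where
  "is_tomb (Tomb _) = True"
| "is_tomb _ = False"

fun op_key :: "'k op \<Rightarrow> 'k" where
  "op_key (Ins u) = u"
| "op_key (Del u) = u"
| "op_key (Qry u) = u"

definition valid_table :: "('k \<Rightarrow> nat) \<Rightarrow> 'k table \<Rightarrow> bool" where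
  "valid_table h T \<longleftrightarrow>
     finite {p. T p \<noteq> Free} \<and>
     (\<forall>p. T p \<noteq> Free \<longrightarrow> slot_hash h (T p) \<le> p \<and>
                         (\<forall>q\<in>{slot_hash h (T p)..p}. T q \<noteq> Free)) \<and>
     (\<forall>p. T p \<noteq> Free \<longrightarrow> T (Suc p) \<noteq> Free \<longrightarrow>
                         slot_hash h (T p) \<le> slot_hash h (T (Suc p))) \<and>
     (\<forall>p q k. T p = Key k \<longrightarrow> T q = Key k \<longrightarrow> p = q)"

definition no_tombstones :: "'k table \<Rightarrow> bool" where
  "no_tombstones T \<longleftrightarrow> (\<forall>p. \<not> is_tomb (T p))"

definition query_stop :: "('k \<Rightarrow> nat) \<Rightarrow> 'k table \<Rightarrow> 'k \<Rightarrow> nat" where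
  "query_stop h T u = (LEAST p. h u \<le> p \<and>
      (T p = Key u \<or> T p = Free \<or> slot_hash h (T p) > h u))"

definition query_time :: "('k \<Rightarrow> nat) \<Rightarrow> 'k table \<Rightarrow> 'k \<Rightarrow> nat" where
  "query_time h T u = query_stop h T u - h u + 1"

text \<open>Insertion: u is placed at its hash-order position (the first slot at or after h(u)
that is free or holds an entry of hash \<open>\<ge> h(u)\<close>), and the subsequent entries are shifted
right by one until the first tombstone or free slot, which is used.\<close>
definition ins_pos :: "('k \<Rightarrow> nat) \<Rightarrow> 'k table \<Rightarrow> 'k \<Rightarrow> nat" where
  "ins_pos h T u = (LEAST p. h u \<le> p \<and> (T p = Free \<or> h u \<le> slot_hash h (T p)))"

definition ins_end :: "('k \<Rightarrow> nat) \<Rightarrow> 'k table \<Rightarrow> 'k \<Rightarrow> nat" where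
  "ins_end h T u = (LEAST r. ins_pos h T u \<le> r \<and> (T r = Free \<or> is_tomb (T r)))"

definition insert_time :: "('k \<Rightarrow> nat) \<Rightarrow> 'k table \<Rightarrow> 'k \<Rightarrow> nat" where
  "insert_time h T u = ins_end h T u - h u + 1"

definition ins_peak :: "('k \<Rightarrow> nat) \<Rightarrow> 'k table \<Rightarrow> 'k \<Rightarrow> nat" where
  "ins_peak h T u = (case T (ins_end h T u) of Tomb k \<Rightarrow> h k | _ \<Rightarrow> ins_end h T u)"

definition displacement :: "('k \<Rightarrow> nat) \<Rightarrow> 'k table \<Rightarrow> 'k \<Rightarrow> nat" where
  "displacement h T u = ins_peak h T u - h u"

definition do_insert :: "('k \<Rightarrow> nat) \<Rightarrow> 'k table \<Rightarrow> 'k \<Rightarrow> 'k table" where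
  "do_insert h T u = (\<lambda>p. if p < ins_pos h T u \<or> ins_end h T u < p then T p
                          else if p = ins_pos h T u then Key u else T (p - 1))"

definition do_delete :: "('k \<Rightarrow> nat) \<Rightarrow> 'k table \<Rightarrow> 'k \<Rightarrow> 'k table" where
  "do_delete h T u = (if T (query_stop h T u) = Key u
                      then T(query_stop h T u := Tomb u) else T)"

fun step :: "('k \<Rightarrow> nat) \<Rightarrow> 'k table \<Rightarrow> 'k op \<Rightarrow> 'k table" where
  "step h T (Ins u) = do_insert h T u"
| "step h T (Del u) = do_delete h T u"
| "step h T (Qry u) = T"

fun op_time :: "('k \<Rightarrow> nat) \<Rightarrow> 'k table \<Rightarrow> 'k op \<Rightarrow> nat" where
  "op_time h T (Ins u) = insert_time h T u"
| "op_time h T (Del u) = query_time h T u"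
| "op_time h T (Qry u) = query_time h T u"

definition state :: "('k \<Rightarrow> nat) \<Rightarrow> 'k table \<Rightarrow> 'k op list \<Rightarrow> nat \<Rightarrow> 'k table" where
  "state h T0 ops t = foldl (step h) T0 (take t ops)"

text \<open>A window between two consecutive rebuilds: it starts from a valid table produced
by a rebuild (hence without tombstones); each insertion inserts a key not currently
present in the table.\<close>
definition legal_window :: "('k \<Rightarrow> nat) \<Rightarrow> 'k table \<Rightarrow> 'k op list \<Rightarrow> bool" where
  "legal_window h T0 ops \<longleftrightarrow> valid_table h T0 \<and> no_tombstones T0 \<and>
     (\<forall>t < length ops. \<forall>u. ops ! t = Ins u \<longrightarrow> (\<forall>p. state h T0 ops t p \<noteq> Key u))"

definition window_keys :: "'k table \<Rightarrow> 'k op list \<Rightarrow> 'k set" where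
  "window_keys T0 ops = {k. \<exists>p. T0 p = Key k} \<union> {u. Ins u \<in> set ops}"

definition pos_offset :: "('k \<Rightarrow> nat) \<Rightarrow> 'k table \<Rightarrow> nat \<Rightarrow> nat" where
  "pos_offset h Tend i = (GREATEST j. i \<le> j \<and>
      (\<forall>p\<in>{i..<j}. Tend p \<noteq> Free \<and> slot_hash h (Tend p) < i)) - i"

definition spillover :: "('k \<Rightarrow> nat) \<Rightarrow> 'k set \<Rightarrow> nat \<Rightarrow> nat" where
  "spillover h K i = (GREATEST k. 4 * k \<le> card {x\<in>K. i \<le> h x \<and> h x < i + k})"

end

theory Submission imports Defs begin


lemma valid_finite: "valid_table h T \<Longrightarrow> finite {p. T p \<noteq> Free}" by (simp add: valid_table_def)
lemma valid_le: "valid_table h T \<Longrightarrow> T p \<noteq> Free \<Longrightarrow> slot_hash h (T p) \<le> p"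
  by (simp add: valid_table_def)
lemma valid_run: "valid_table h T \<Longrightarrow> T p \<noteq> Free \<Longrightarrow> slot_hash h (T p) \<le> q \<Longrightarrow> q \<le> p \<Longrightarrow> T q \<noteq> Free"
  unfolding valid_table_def by auto
lemma valid_sorted: "valid_table h T \<Longrightarrow> T p \<noteq> Free \<Longrightarrow> T (Suc p) \<noteq> Free \<Longrightarrow> slot_hash h (T p) \<le> slot_hash h (T (Suc p))"
  unfolding valid_table_def by auto
lemma valid_dist: "valid_table h T \<Longrightarrow> T p = Key k \<Longrightarrow> T q = Key k \<Longrightarrow> p = q"
  unfolding valid_table_def by auto

lemma exists_free: assumes "valid_table h T" shows "\<exists>p\<ge>x. T p = Free"
proof (rule ccontr)
  assume "\<not> ?thesis"
  then have "{x..} \<subseteq> {p. T p \<noteq> Free}" by auto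
  then have "finite {x..}" using valid_finite[OF assms] rev_finite_subset by blast
  then show False using infinite_Ici by blast
qed

lemma chain_mono: "valid_table h T \<Longrightarrow> a \<le> b \<Longrightarrow> (\<forall>q. a \<le> q \<and> q \<le> b \<longrightarrow> T q \<noteq> Free) \<Longrightarrow> slot_hash h (T a) \<le> slot_hash h (T b)"
proof (induction b)
  case 0 then show ?case by simp
next
  case (Suc b)
  show ?case
  proof (cases "a = Suc b")
    case False
    then have "a \<le> b" using Suc.prems by simp
    then have "slot_hash h (T a) \<le> slot_hash h (T b)" using Suc by auto
    also have "\<dots> \<le> slot_hash h (T (Suc b))" using valid_sorted[OF Suc.prems(1)] Suc.prems \<open>a \<le> b\<close> by auto
    finally show ?thesis .
  qed simp
qed

lemma ip_props: assumes "valid_table h T"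
  shows "h u \<le> ins_pos h T u"
    "T (ins_pos h T u) = Free \<or> h u \<le> slot_hash h (T (ins_pos h T u))"
    "\<And>p. h u \<le> p \<Longrightarrow> p < ins_pos h T u \<Longrightarrow> T p \<noteq> Free \<and> slot_hash h (T p) < h u"
proof -
  obtain p where p: "p \<ge> h u" "T p = Free" using exists_free[OF assms] by blast
  let ?P = "\<lambda>p. h u \<le> p \<and> (T p = Free \<or> h u \<le> slot_hash h (T p))"
  have "?P (ins_pos h T u)" unfolding ins_pos_def by (rule LeastI[of ?P p]) (use p in auto)
  then show "h u \<le> ins_pos h T u" "T (ins_pos h T u) = Free \<or> h u \<le> slot_hash h (T (ins_pos h T u))" by auto
  fix q assume "h u \<le> q" "q < ins_pos h T u"
  then have "\<not> ?P q" unfolding ins_pos_def using not_less_Least by blast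
  then show "T q \<noteq> Free \<and> slot_hash h (T q) < h u" using \<open>h u \<le> q\<close> by auto
qed

lemma ie_props: assumes "valid_table h T"
  shows "ins_pos h T u \<le> ins_end h T u"
    "T (ins_end h T u) = Free \<or> is_tomb (T (ins_end h T u))"
    "\<And>p. ins_pos h T u \<le> p \<Longrightarrow> p < ins_end h T u \<Longrightarrow> T p \<noteq> Free \<and> \<not> is_tomb (T p)"
proof -
  obtain p where p: "p \<ge> ins_pos h T u" "T p = Free" using exists_free[OF assms] by blast
  let ?P = "\<lambda>r. ins_pos h T u \<le> r \<and> (T r = Free \<or> is_tomb (T r))"
  have "?P (ins_end h T u)" unfolding ins_end_def by (rule LeastI[of ?P p]) (use p in auto)
  then show "ins_pos h T u \<le> ins_end h T u" "T (ins_end h T u) = Free \<or> is_tomb (T (ins_end h T u))" by auto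
  fix q assume "ins_pos h T u \<le> q" "q < ins_end h T u"
  then have "\<not> ?P q" unfolding ins_end_def using not_less_Least by blast
  then show "T q \<noteq> Free \<and> \<not> is_tomb (T q)" using \<open>ins_pos h T u \<le> q\<close> by auto
qed

lemma qs_props: assumes "valid_table h T"
  shows "h u \<le> query_stop h T u"
    "T (query_stop h T u) = Key u \<or> T (query_stop h T u) = Free \<or> slot_hash h (T (query_stop h T u)) > h u"
    "\<And>p. h u \<le> p \<Longrightarrow> p < query_stop h T u \<Longrightarrow> T p \<noteq> Key u \<and> T p \<noteq> Free \<and> slot_hash h (T p) \<le> h u"
proof -
  obtain p where p: "p \<ge> h u" "T p = Free" using exists_free[OF assms] by blast
  let ?P = "\<lambda>p. h u \<le> p \<and> (T p = Key u \<or> T p = Free \<or> slot_hash h (T p) > h u)"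
  have "?P (query_stop h T u)" unfolding query_stop_def by (rule LeastI[of ?P p]) (use p in auto)
  then show "h u \<le> query_stop h T u" "T (query_stop h T u) = Key u \<or> T (query_stop h T u) = Free \<or> slot_hash h (T (query_stop h T u)) > h u" by auto
  fix q assume "h u \<le> q" "q < query_stop h T u"
  then have "\<not> ?P q" unfolding query_stop_def using not_less_Least by blast
  then show "T q \<noteq> Key u \<and> T q \<noteq> Free \<and> slot_hash h (T q) \<le> h u" using \<open>h u \<le> q\<close> by auto
qed



lemma ins_at: "do_insert h T u p = (if p < ins_pos h T u \<or> ins_end h T u < p then T p
   else if p = ins_pos h T u then Key u else T (p - 1))"
  by (simp add: do_insert_def)

lemma ins_mid: assumes "valid_table h T" "ins_pos h T u \<le> q" "q \<le> ins_end h T u"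
  shows "do_insert h T u q \<noteq> Free"
proof (cases "q = ins_pos h T u")
  case False
  then have "T (q - 1) \<noteq> Free" using ie_props(3)[OF assms(1), where p="q-1" and u=u] assms by auto
  then show ?thesis using assms False by (simp add: ins_at)
qed (use ie_props(1)[OF assms(1), of u] in \<open>simp add: ins_at\<close>)

lemma ins_valid: assumes V: "valid_table h T" and nu: "\<forall>p. T p \<noteq> Key u"
  shows "valid_table h (do_insert h T u)"
proof -
  define ip where "ip = ins_pos h T u"
  define ie where "ie = ins_end h T u"
  define T' where "T' = do_insert h T u"
  have T'at: "T' p = (if p < ip \<or> ie < p then T p else if p = ip then Key u else T (p - 1))" for p
    unfolding T'_def ip_def ie_def by (rule ins_at)
  note ip1 = ip_props(1,2)[OF V, of u, folded ip_def]
  note ip2 = ip_props(3)[OF V, of u, folded ip_def]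
  note ie1 = ie_props(1,2)[OF V, of u, folded ip_def ie_def]
  note ie2 = ie_props(3)[OF V, of u, folded ip_def ie_def]
  have mid: "ip \<le> q \<Longrightarrow> q \<le> ie \<Longrightarrow> T' q \<noteq> Free" for q
    using ins_mid[OF V] unfolding T'_def ip_def ie_def by blast
  have nf_out: "T' q \<noteq> Free" if "q < ip \<or> ie < q" "T q \<noteq> Free" for q
    using that T'at by auto
  have fin: "finite {p. T' p \<noteq> Free}"
  proof -
    have "{p. T' p \<noteq> Free} \<subseteq> {p. T p \<noteq> Free} \<union> {ip..ie}" using T'at by auto
    then show ?thesis using valid_finite[OF V] finite_subset by blast
  qed
  have run: "slot_hash h (T' p) \<le> p \<and> (\<forall>q\<in>{slot_hash h (T' p)..p}. T' q \<noteq> Free)" if "T' p \<noteq> Free" for p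
  proof -
    have *: "\<forall>q\<in>{H..p}. T' q \<noteq> Free" if "\<And>q. H \<le> q \<Longrightarrow> q \<le> p \<Longrightarrow> q < ip \<or> ie < q \<Longrightarrow> T q \<noteq> Free" for H
      using that mid nf_out by (meson atLeastAtMost_iff not_le)
    consider "p < ip \<or> ie < p" | "p = ip" | "ip < p" "p \<le> ie" by linarith
    then show ?thesis
    proof cases
      case 1
      then have e: "T' p = T p" using T'at by simp
      with that have "T p \<noteq> Free" by simp
      then show ?thesis unfolding e using valid_le[OF V] valid_run[OF V] * by (metis e)
    next
      case 2
      then have e: "T' p = Key u" using T'at ie1 by simp
      show ?thesis unfolding e
      proof (intro conjI *)
        show "slot_hash h (Key u) \<le> p" using ip1 2 by simp
        fix q assume "slot_hash h (Key u) \<le> q" "q \<le> p" "q < ip \<or> ie < q"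
        then show "T q \<noteq> Free" using ip2[of q] 2 ie1 by auto
      qed
    next
      case 3
      then have e: "T' p = T (p - 1)" using T'at by simp
      have nf: "T (p - 1) \<noteq> Free" using ie2[of "p-1"] 3 by auto
      have le: "slot_hash h (T (p - 1)) \<le> p - 1" using valid_le[OF V nf] .
      show ?thesis unfolding e
      proof (intro conjI *)
        show "slot_hash h (T (p - 1)) \<le> p" using le by simp
        fix q assume q: "slot_hash h (T (p - 1)) \<le> q" "q \<le> p" "q < ip \<or> ie < q"
        then have "q \<le> p - 1" using 3 by auto
        then show "T q \<noteq> Free" using valid_run[OF V nf] q by blast
      qed
    qed
  qed
  have sorted: "slot_hash h (T' p) \<le> slot_hash h (T' (Suc p))" if nf1: "T' p \<noteq> Free" and nf2: "T' (Suc p) \<noteq> Free" for p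
  proof -
    consider "Suc p < ip" | "Suc p = ip" | "p = ip" | "ip < p" "Suc p \<le> ie" | "p = ie" "ip < p" | "ie < p" by linarith
    then show ?thesis
    proof cases
      case 1 then show ?thesis using T'at nf1 nf2 valid_sorted[OF V] by auto
    next
      case 2
      then have e: "T' p = T p" "T' (Suc p) = Key u" using T'at ie1 by auto
      have nf: "T p \<noteq> Free" using nf1 e by simp
      show ?thesis
      proof (cases "h u \<le> p")
        case True then show ?thesis using ip2[of p] 2 e by auto
      next
        case False then show ?thesis using valid_le[OF V nf] e by auto
      qed
    next
      case 3
      show ?thesis
      proof (cases "ip = ie")
        case False
        then have e: "T' p = Key u" "T' (Suc p) = T ip" using T'at 3 ie1 by auto
        have "T ip \<noteq> Free" using ie2[of ip] False ie1 by auto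
        then show ?thesis using e ip1 by auto
      next
        case True
        then have e: "T' p = Key u" "T' (Suc p) = T (Suc ip)" using T'at 3 by auto
        have nfs: "T (Suc ip) \<noteq> Free" using nf2 e by simp
        show ?thesis
        proof (cases "T ip = Free")
          case True
          have "slot_hash h (T (Suc ip)) > ip"
          proof (rule ccontr)
            assume "\<not> ?thesis"
            then show False using valid_run[OF V nfs, of ip] True by auto
          qed
          then show ?thesis using e ip1 by simp
        next
          case False
          then show ?thesis using e ip1 valid_sorted[OF V False nfs] by auto
        qed
      qed
    next
      case 4
      then have e: "T' p = T (p - 1)" "T' (Suc p) = T p" using T'at by auto
      have "T (p - 1) \<noteq> Free" "T p \<noteq> Free" using ie2[of "p-1"] ie2[of p] 4 by auto
      then show ?thesis using e valid_sorted[OF V, of "p - 1"] 4 by auto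
    next
      case 5
      then have e: "T' p = T (p - 1)" "T' (Suc p) = T (Suc ie)" using T'at by auto
      have nfa: "T (p - 1) \<noteq> Free" using ie2[of "p-1"] 5 by auto
      have nfs: "T (Suc ie) \<noteq> Free" using nf2 e by simp
      show ?thesis
      proof (cases "T ie = Free")
        case True
        have "slot_hash h (T (Suc ie)) > ie"
        proof (rule ccontr)
          assume "\<not> ?thesis"
          then show False using valid_run[OF V nfs, of ie] True by auto
        qed
        then show ?thesis using e valid_le[OF V nfa] 5 by simp
      next
        case False
        have "slot_hash h (T (p - 1)) \<le> slot_hash h (T ie)" using valid_sorted[OF V nfa, of] False 5
          by (metis Suc_diff_1 gr_implies_not0 not_gr0)
        also have "\<dots> \<le> slot_hash h (T (Suc ie))" using valid_sorted[OF V False nfs] .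
        finally show ?thesis using e by simp
      qed
    next
      case 6 then show ?thesis using T'at nf1 nf2 valid_sorted[OF V] by auto
    qed
  qed
  have dist: "p = q" if "T' p = Key k" "T' q = Key k" for p q k
  proof (cases "k = u")
    case True
    have "p = ip" using that(1) T'at nu True by (auto split: if_splits)
    moreover have "q = ip" using that(2) T'at nu True by (auto split: if_splits)
    ultimately show ?thesis by simp
  next
    case False
    define f where "f x = (if x < ip \<or> ie < x then x else x - 1)" for x
    have "T (f p) = Key k" "T (f q) = Key k" using that T'at False by (auto simp: f_def split: if_splits)
    then have "f p = f q" using valid_dist[OF V] by blast
    moreover have "p \<noteq> ip" "q \<noteq> ip" using that T'at False ie1 by auto
    ultimately show ?thesis using ie1 by (auto simp: f_def split: if_splits)
  qed
  show ?thesis unfolding T'_def[symmetric] valid_table_def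
    using fin run sorted dist by blast
qed

lemma del_valid: assumes V: "valid_table h T" shows "valid_table h (do_delete h T u)"
proof (cases "T (query_stop h T u) = Key u")
  case True
  define s where "s = query_stop h T u"
  have e: "do_delete h T u = T(s := Tomb u)" using True by (simp add: do_delete_def s_def)
  have nf: "(T(s := Tomb u)) p \<noteq> Free \<longleftrightarrow> T p \<noteq> Free" for p using True s_def by auto
  have hs: "slot_hash h ((T(s := Tomb u)) p) = slot_hash h (T p)" for p using True s_def by auto
  show ?thesis unfolding e valid_table_def nf hs
    using V True s_def unfolding valid_table_def by (auto split: if_splits)
qed (simp add: do_delete_def V)



definition Aset :: "('k \<Rightarrow> nat) \<Rightarrow> 'k table \<Rightarrow> nat \<Rightarrow> nat set" where
  "Aset h T j = {q. T q \<noteq> Free \<and> slot_hash h (T q) = j}"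

fun slot_key :: "'k slot \<Rightarrow> 'k" where
  "slot_key (Key k) = k" | "slot_key (Tomb k) = k" | "slot_key Free = undefined"

lemma Aset_finite: "valid_table h T \<Longrightarrow> finite (Aset h T j)"
  using valid_finite by (auto simp: Aset_def intro: finite_subset[of _ "{p. T p \<noteq> Free}"])

lemma no_tomb_j: assumes V: "valid_table h T" and nt: "\<not> (is_tomb (T (ins_end h T u)) \<and> slot_hash h (T (ins_end h T u)) = h u)"
  and q: "T q = Tomb k" "h k = h u"
  shows False
proof -
  define ip where "ip = ins_pos h T u"
  define ie where "ie = ins_end h T u"
  note ip1 = ip_props(1,2)[OF V, of u, folded ip_def]
  note ie1 = ie_props(1,2)[OF V, of u, folded ip_def ie_def]
  have nfq: "T q \<noteq> Free" using q by simp
  have hq: "slot_hash h (T q) = h u" using q by simp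
  have "h u \<le> q" using valid_le[OF V nfq] hq by simp
  then have "ip \<le> q" unfolding ip_def ins_pos_def using hq by (intro Least_le) simp
  then have "ie \<le> q" unfolding ie_def ins_end_def using q ip_def by (intro Least_le) simp
  show False
  proof (cases "ie = q")
    case True then show False using nt q ie_def by simp
  next
    case False
    have allnf: "\<forall>x. ip \<le> x \<and> x \<le> q \<longrightarrow> T x \<noteq> Free"
      using valid_run[OF V nfq] hq ip1 by auto
    have "slot_hash h (T ip) \<le> slot_hash h (T ie)" using chain_mono[OF V ie1(1)] allnf \<open>ie \<le> q\<close> by auto
    moreover have "h u \<le> slot_hash h (T ip)" using ip1 allnf \<open>ip \<le> q\<close> by auto
    moreover have "slot_hash h (T ie) \<le> slot_hash h (T q)" using chain_mono[OF V \<open>ie \<le> q\<close>] allnf ie1 by auto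
    moreover have "T ie \<noteq> Free" using allnf ie1 \<open>ie \<le> q\<close> by auto
    ultimately show False using nt hq ie1 ie_def by auto
  qed
qed

lemma ins_count: assumes V: "valid_table h T" and nu: "\<forall>p. T p \<noteq> Key u"
  and KK: "\<forall>p k. T p = Key k \<longrightarrow> k \<in> K" and fK: "finite K"
  and C: "card (Aset h T j) \<le> card {k\<in>K. h k = j}"
  shows "card (Aset h (do_insert h T u) j) \<le> card {k\<in>insert u K. h k = j}"
proof -
  define ip where "ip = ins_pos h T u"
  define ie where "ie = ins_end h T u"
  define T' where "T' = do_insert h T u"
  have T'at: "T' p = (if p < ip \<or> ie < p then T p else if p = ip then Key u else T (p - 1))" for p
    unfolding T'_def ip_def ie_def by (rule ins_at)
  note ie1 = ie_props(1,2)[OF V, of u, folded ip_def ie_def]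
  have V': "valid_table h T'" using ins_valid[OF V nu] T'_def by simp
  define f where "f x = (if x < ip \<or> ie < x then x else x - 1)" for x
  have fT: "T' x = T (f x)" if "x \<noteq> ip" for x using that T'at by (simp add: f_def)
  have finj: "inj_on f (UNIV - {ip})" unfolding inj_on_def f_def using ie1 by auto
  have fmap: "f ` (Aset h T' j - {ip}) \<subseteq> Aset h T j" using fT by (auto simp: Aset_def)
  have c1: "card (Aset h T' j - {ip}) \<le> card (Aset h T j)"
    using card_inj_on_le[OF inj_on_subset[OF finj] fmap Aset_finite[OF V]] by auto
  have Kmono: "card {k\<in>K. h k = j} \<le> card {k\<in>insert u K. h k = j}"
    using fK by (intro card_mono) auto
  have "card (Aset h T' j) \<le> card {k\<in>insert u K. h k = j}"
  proof (cases "h u = j")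
    case False
    then have "ip \<notin> Aset h T' j" using T'at ie1 by (auto simp: Aset_def)
    then show ?thesis using c1 C Kmono by simp
  next
    case hj: True
    show ?thesis
    proof (cases "is_tomb (T ie) \<and> slot_hash h (T ie) = h u")
      case True
      define g where "g x = (if x = ip then ie else f x)" for x
      have ginj: "inj g" unfolding inj_def g_def f_def using ie1 by auto
      have "g ` Aset h T' j \<subseteq> Aset h T j"
        using fT True hj by (auto simp: Aset_def g_def)
      then have "card (Aset h T' j) \<le> card (Aset h T j)"
        using card_inj_on_le[OF inj_on_subset[OF ginj] _ Aset_finite[OF V]] by auto
      then show ?thesis using C Kmono by simp
    next
      case False
      have nt: "\<not> is_tomb (T q)" if "q \<in> Aset h T j" for q
      proof
        assume "is_tomb (T q)"
        then obtain k where "T q = Tomb k" by (cases "T q") auto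
        moreover then have "h k = h u" using that hj by (simp add: Aset_def)
        ultimately show False using no_tomb_j[OF V] False ie_def by blast
      qed
      have keys: "\<exists>k. T q = Key k" if "q \<in> Aset h T j" for q
        using nt[OF that] that by (cases "T q") (auto simp: Aset_def)
      have kinj: "inj_on (\<lambda>q. slot_key (T q)) (Aset h T j)"
      proof (rule inj_onI)
        fix p q assume "p \<in> Aset h T j" "q \<in> Aset h T j" "slot_key (T p) = slot_key (T q)"
        then show "p = q" using keys valid_dist[OF V] by (metis slot_key.simps(1))
      qed
      have kmap: "(\<lambda>q. slot_key (T q)) ` Aset h T j \<subseteq> {k\<in>K. h k = j} - {u}"
      proof
        fix x assume "x \<in> (\<lambda>q. slot_key (T q)) ` Aset h T j"
        then obtain q where qA: "q \<in> Aset h T j" and x: "x = slot_key (T q)" by blast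
        obtain k where k: "T q = Key k" using keys[OF qA] by blast
        show "x \<in> {k\<in>K. h k = j} - {u}" using k x KK nu qA by (auto simp: Aset_def)
      qed
      have c2: "card (Aset h T j) \<le> card ({k\<in>K. h k = j} - {u})"
        using card_inj_on_le[OF kinj kmap] fK by auto
      have "{k\<in>insert u K. h k = j} = insert u ({k\<in>K. h k = j} - {u})" using hj by auto
      moreover have "finite ({k\<in>K. h k = j} - {u})" using fK by simp
      ultimately have c3: "card {k\<in>insert u K. h k = j} = card ({k\<in>K. h k = j} - {u}) + 1"
        by (metis Diff_iff card_insert_disjoint insertI1 Suc_eq_plus1)
      have "card (Aset h T' j) \<le> card (Aset h T' j - {ip}) + 1"
        using Aset_finite[OF V'] by (metis card_Diff1_le card_Suc_Diff1 Suc_eq_plus1 le_SucI eq_refl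
            card_Diff_singleton_if)
      then show ?thesis using c1 c2 c3 by linarith
    qed
  qed
  then show ?thesis by (simp add: T'_def)
qed



definition Pof :: "('k \<Rightarrow> nat) \<Rightarrow> 'k table \<Rightarrow> nat \<Rightarrow> nat \<Rightarrow> bool" where
  "Pof h T i j \<longleftrightarrow> (\<forall>p\<in>{i..<j}. T p \<noteq> Free \<and> slot_hash h (T p) < i)"

lemma Pof_le_offset: assumes V: "valid_table h T" and P: "Pof h T i j" and ij: "i \<le> j"
  shows "j \<le> i + pos_offset h T i"
proof -
  obtain f where f: "f \<ge> i" "T f = Free" using exists_free[OF V] by blast
  let ?Q = "\<lambda>j. i \<le> j \<and> (\<forall>p\<in>{i..<j}. T p \<noteq> Free \<and> slot_hash h (T p) < i)"
  have b: "y \<le> f" if "?Q y" for y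
  proof (rule ccontr)
    assume "\<not> y \<le> f" then show False using that f by auto
  qed
  have "?Q j" using P ij by (simp add: Pof_def)
  then have "j \<le> Greatest ?Q" using b by (rule Greatest_le_nat)
  then show ?thesis unfolding pos_offset_def by simp
qed

lemma Pof_ins: assumes V: "valid_table h T" and P: "Pof h T i j"
  shows "Pof h (do_insert h T u) i j"
  unfolding Pof_def
proof
  fix p assume p: "p \<in> {i..<j}"
  define ip where "ip = ins_pos h T u"
  define ie where "ie = ins_end h T u"
  have T'at: "do_insert h T u p = (if p < ip \<or> ie < p then T p else if p = ip then Key u else T (p - 1))"
    unfolding ip_def ie_def by (rule ins_at)
  note ip1 = ip_props(1,2)[OF V, of u, folded ip_def]
  note ie2 = ie_props(3)[OF V, of u, folded ip_def ie_def]
  consider "p < ip \<or> ie < p" | "p = ip" "\<not> ie < p" | "ip < p" "p \<le> ie" by linarith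
  then show "do_insert h T u p \<noteq> Free \<and> slot_hash h (do_insert h T u p) < i"
  proof cases
    case 1 then show ?thesis using T'at P p by (simp add: Pof_def)
  next
    case 2
    have "T ip \<noteq> Free" "slot_hash h (T ip) < i" using P p 2 by (auto simp: Pof_def)
    then have "h u < i" using ip1 by auto
    then show ?thesis using T'at 2 by simp
  next
    case 3
    then have e: "do_insert h T u p = T (p - 1)" using T'at by simp
    have nf: "T (p - 1) \<noteq> Free" using ie2[of "p-1"] 3 by auto
    show ?thesis
    proof (cases "i \<le> p - 1")
      case True then show ?thesis using e P p by (auto simp: Pof_def)
    next
      case False then show ?thesis using e nf valid_le[OF V nf] by auto
    qed
  qed
qed

lemma del_eq: assumes "T (query_stop h T u) = Key u"
  shows "do_delete h T u = T(query_stop h T u := Tomb u)" using assms by (simp add: do_delete_def)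

lemma del_nf: "do_delete h T u p \<noteq> Free \<longleftrightarrow> T p \<noteq> Free"
  by (cases "T (query_stop h T u) = Key u") (auto simp: do_delete_def)

lemma del_hash: "slot_hash h (do_delete h T u p) = slot_hash h (T p)"
  by (cases "T (query_stop h T u) = Key u") (auto simp: do_delete_def)

lemma del_key: "do_delete h T u p = Key k \<Longrightarrow> T p = Key k"
  by (cases "T (query_stop h T u) = Key u") (auto simp: do_delete_def split: if_splits)

lemma Pof_del: "Pof h T i j \<Longrightarrow> Pof h (do_delete h T u) i j"
  by (simp add: Pof_def del_nf del_hash)

lemma Aset_del: "Aset h (do_delete h T u) j = Aset h T j"
  by (simp add: Aset_def del_nf del_hash)

definition Ncnt :: "('k \<Rightarrow> nat) \<Rightarrow> 'k set \<Rightarrow> nat \<Rightarrow> nat \<Rightarrow> nat" where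
  "Ncnt h W i k = card {x\<in>W. i \<le> h x \<and> h x < i + k}"

lemma spill_bound: assumes fW: "finite W"
  shows "Ncnt h W i L \<le> 4 * spillover h W i + 4 + 4 * L"
proof (cases "Ncnt h W i L \<le> 4 * L")
  case False
  let ?Q = "\<lambda>k. 4 * k \<le> card {x\<in>W. i \<le> h x \<and> h x < i + k}"
  have b: "y \<le> card W" if "?Q y" for y
  proof -
    have "card {x\<in>W. i \<le> h x \<and> h x < i + y} \<le> card W" using fW by (intro card_mono) auto
    then show ?thesis using that by simp
  qed
  have QL: "?Q L" using False by (simp add: Ncnt_def)
  have Ls: "L \<le> spillover h W i" unfolding spillover_def using QL b by (rule Greatest_le_nat)
  have "\<not> ?Q (Suc (spillover h W i))"
  proof
    assume "?Q (Suc (spillover h W i))"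
    then have "Suc (spillover h W i) \<le> spillover h W i" unfolding spillover_def[of h W i]
      using b by (rule Greatest_le_nat)
    then show False by simp
  qed
  moreover have "Ncnt h W i L \<le> Ncnt h W i (Suc (spillover h W i))"
    unfolding Ncnt_def using fW Ls by (intro card_mono) auto
  ultimately show ?thesis by (simp add: Ncnt_def)
qed simp

lemma sum_count: assumes V: "valid_table h T" and fW: "finite W"
  and C: "\<And>j. card (Aset h T j) \<le> card {k\<in>W. h k = j}"
  shows "card {q. T q \<noteq> Free \<and> a \<le> slot_hash h (T q) \<and> slot_hash h (T q) \<le> b}
         \<le> card {k\<in>W. a \<le> h k \<and> h k \<le> b}"
proof -
  have e1: "{q. T q \<noteq> Free \<and> a \<le> slot_hash h (T q) \<and> slot_hash h (T q) \<le> b} = (\<Union>j\<in>{a..b}. Aset h T j)"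
    by (auto simp: Aset_def)
  have e2: "{k\<in>W. a \<le> h k \<and> h k \<le> b} = (\<Union>j\<in>{a..b}. {k\<in>W. h k = j})" by auto
  have "card (\<Union>j\<in>{a..b}. Aset h T j) = (\<Sum>j\<in>{a..b}. card (Aset h T j))"
    by (rule card_UN_disjoint) (auto simp: Aset_finite[OF V], auto simp: Aset_def)
  also have "\<dots> \<le> (\<Sum>j\<in>{a..b}. card {k\<in>W. h k = j})" by (rule sum_mono) (rule C)
  also have "\<dots> = card (\<Union>j\<in>{a..b}. {k\<in>W. h k = j})"
    by (rule card_UN_disjoint[symmetric]) (auto simp: fW)
  finally show ?thesis using e1 e2 by simp
qed



lemma ip_Pof: assumes V: "valid_table h T" shows "Pof h T (h u) (ins_pos h T u)"
  using ip_props(3)[OF V, of u] by (auto simp: Pof_def)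

lemma query_bound: assumes V: "valid_table h T"
  and O: "\<And>j. Pof h T (h u) j \<Longrightarrow> h u \<le> j \<Longrightarrow> j \<le> h u + off"
  and fW: "finite W" and C: "\<And>j. card (Aset h T j) \<le> card {k\<in>W. h k = j}"
  shows "query_time h T u \<le> off + Ncnt h W (h u) 1 + 1"
proof -
  define m where "m = ins_pos h T u"
  define s where "s = query_stop h T u"
  note ip1 = ip_props(1,2)[OF V, of u, folded m_def]
  note qs1 = qs_props(1)[OF V, of u, folded s_def]
  note qs3 = qs_props(3)[OF V, of u, folded s_def]
  have mo: "m \<le> h u + off" using O[OF ip_Pof[OF V, of u, folded m_def]] ip1 by simp
  have "s - m \<le> Ncnt h W (h u) 1"
  proof (cases "m < s")
    case True
    have sub: "{m..<s} \<subseteq> Aset h T (h u)"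
    proof
      fix p assume p: "p \<in> {m..<s}"
      have allnf: "\<forall>x. m \<le> x \<and> x \<le> p \<longrightarrow> T x \<noteq> Free" using qs3 p ip1 by auto
      have "slot_hash h (T m) \<le> slot_hash h (T p)" using chain_mono[OF V _ allnf] p by auto
      moreover have "h u \<le> slot_hash h (T m)" using ip1 allnf p by auto
      moreover have "slot_hash h (T p) \<le> h u" "T p \<noteq> Free" using qs3[of p] p ip1 by auto
      ultimately show "p \<in> Aset h T (h u)" by (simp add: Aset_def)
    qed
    have "s - m \<le> card (Aset h T (h u))" using card_mono[OF Aset_finite[OF V] sub] by simp
    also have "\<dots> \<le> card {k\<in>W. h k = h u}" by (rule C)
    also have "{k\<in>W. h k = h u} = {x\<in>W. h u \<le> h x \<and> h x < h u + 1}" by auto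
    finally show ?thesis by (simp add: Ncnt_def)
  qed simp
  then show ?thesis using mo qs1 unfolding query_time_def s_def[symmetric] by linarith
qed

lemma insert_bound: assumes V: "valid_table h T"
  and O: "\<And>j. Pof h T (h u) j \<Longrightarrow> h u \<le> j \<Longrightarrow> j \<le> h u + off"
  and fW: "finite W" and C: "\<And>j. card (Aset h T j) \<le> card {k\<in>W. h k = j}"
  shows "insert_time h T u \<le> off + Ncnt h W (h u) (displacement h T u + 1) + 1"
proof -
  define ip where "ip = ins_pos h T u"
  define ie where "ie = ins_end h T u"
  define pk where "pk = ins_peak h T u"
  note ip1 = ip_props(1,2)[OF V, of u, folded ip_def]
  note ie1 = ie_props(1,2)[OF V, of u, folded ip_def ie_def]
  note ie2 = ie_props(3)[OF V, of u, folded ip_def ie_def]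
  have mo: "ip \<le> h u + off" using O[OF ip_Pof[OF V, of u, folded ip_def]] ip1 by simp
  have "ie - ip \<le> Ncnt h W (h u) (displacement h T u + 1)"
  proof (cases "ip < ie")
    case True
    have allnf: "\<forall>x. ip \<le> x \<and> x < ie \<longrightarrow> T x \<noteq> Free" using ie2 by auto
    have hip: "h u \<le> slot_hash h (T ip)" using ip1 allnf True by auto
    have pk_ge: "\<forall>p. ip \<le> p \<and> p < ie \<longrightarrow> slot_hash h (T p) \<le> pk"
    proof (cases "T ie = Free")
      case True
      then have "pk = ie" by (simp add: pk_def ins_peak_def ie_def)
      then show ?thesis using valid_le[OF V] allnf by (metis less_imp_le_nat order.trans le_less_trans linorder_not_le)
    next
      case False
      then obtain k where k: "T ie = Tomb k" using ie1 by (cases "T ie") auto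
      then have pkh: "pk = slot_hash h (T ie)" by (simp add: pk_def ins_peak_def ie_def)
      show ?thesis
      proof (intro allI impI)
        fix p assume "ip \<le> p \<and> p < ie"
        then show "slot_hash h (T p) \<le> pk" unfolding pkh using chain_mono[OF V, of p ie] allnf k
          by (metis less_imp_le_nat linorder_not_le order.trans slot.distinct(3) le_antisym order_le_less)
      qed
    qed
    have "h u \<le> pk" using pk_ge hip True by (metis order.trans order_refl)
    then have dsp: "displacement h T u = pk - h u" by (simp add: displacement_def pk_def)
    have sub: "{ip..<ie} \<subseteq> {q. T q \<noteq> Free \<and> h u \<le> slot_hash h (T q) \<and> slot_hash h (T q) \<le> pk}"
    proof
      fix p assume p: "p \<in> {ip..<ie}"
      have "slot_hash h (T ip) \<le> slot_hash h (T p)" using chain_mono[OF V, of ip p] allnf p by auto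
      then show "p \<in> {q. T q \<noteq> Free \<and> h u \<le> slot_hash h (T q) \<and> slot_hash h (T q) \<le> pk}"
        using hip pk_ge allnf p by auto
    qed
    have fin: "finite {q. T q \<noteq> Free \<and> h u \<le> slot_hash h (T q) \<and> slot_hash h (T q) \<le> pk}"
      using valid_finite[OF V] by (rule finite_subset[rotated]) auto
    have "ie - ip \<le> card {q. T q \<noteq> Free \<and> h u \<le> slot_hash h (T q) \<and> slot_hash h (T q) \<le> pk}"
      using card_mono[OF fin sub] by simp
    also have "\<dots> \<le> card {k\<in>W. h u \<le> h k \<and> h k \<le> pk}" by (rule sum_count[OF V fW C])
    also have "{k\<in>W. h u \<le> h k \<and> h k \<le> pk} = {x\<in>W. h u \<le> h x \<and> h x < h u + (displacement h T u + 1)}"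
      using dsp \<open>h u \<le> pk\<close> by auto
    finally show ?thesis by (simp add: Ncnt_def)
  qed simp
  then show ?thesis using mo ip1 ie1 unfolding insert_time_def ie_def[symmetric] by linarith
qed



definition Kt :: "'k table \<Rightarrow> 'k op list \<Rightarrow> nat \<Rightarrow> 'k set" where
  "Kt T0 ops t = {k. \<exists>p. T0 p = Key k} \<union> {u. Ins u \<in> set (take t ops)}"

definition Inv :: "('k \<Rightarrow> nat) \<Rightarrow> 'k table \<Rightarrow> 'k set \<Rightarrow> bool" where
  "Inv h T K \<longleftrightarrow> valid_table h T \<and> (\<forall>p k. T p = Key k \<longrightarrow> k \<in> K) \<and>
     (\<forall>j. card (Aset h T j) \<le> card {k\<in>K. h k = j}) \<and> finite K"

lemma state_Suc: "t < length ops \<Longrightarrow> state h T0 ops (Suc t) = step h (state h T0 ops t) (ops ! t)"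
  by (simp add: state_def take_Suc_conv_app_nth)

lemma Kt_Suc: "t < length ops \<Longrightarrow> Kt T0 ops (Suc t) =
   (case ops ! t of Ins u \<Rightarrow> insert u (Kt T0 ops t) | _ \<Rightarrow> Kt T0 ops t)"
  by (cases "ops ! t") (auto simp: Kt_def take_Suc_conv_app_nth)

lemma Kt_sub: "Kt T0 ops t \<subseteq> window_keys T0 ops"
  unfolding Kt_def window_keys_def using set_take_subset[of t ops] by blast

lemma Kt_end: "Kt T0 ops (length ops) = window_keys T0 ops"
  by (simp add: Kt_def window_keys_def)

lemma window_finite: assumes V: "valid_table h T0" shows "finite (window_keys T0 ops)"
proof -
  have "{k. \<exists>p. T0 p = Key k} \<subseteq> (\<lambda>p. slot_key (T0 p)) ` {p. T0 p \<noteq> Free}"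
  proof
    fix k assume "k \<in> {k. \<exists>p. T0 p = Key k}"
    then obtain p where "T0 p = Key k" by blast
    then show "k \<in> (\<lambda>p. slot_key (T0 p)) ` {p. T0 p \<noteq> Free}" by (intro image_eqI[of _ _ p]) auto
  qed
  then have "finite {k. \<exists>p. T0 p = Key k}" using valid_finite[OF V] finite_surj by blast
  moreover have "{u. Ins u \<in> set ops} \<subseteq> op_key ` set ops" by force
  then have "finite {u. Ins u \<in> set ops}" using finite_surj by blast
  ultimately show ?thesis by (simp add: window_keys_def)
qed

lemma Inv_0: assumes V: "valid_table h T0" and nt: "no_tombstones T0"
  shows "Inv h T0 (Kt T0 ops 0)"
proof -
  have fK: "finite (Kt T0 ops 0)" by (rule finite_subset[OF Kt_sub window_finite[OF V]])
  have cnt: "card (Aset h T0 j) \<le> card {k\<in>Kt T0 ops 0. h k = j}" for j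
  proof -
    have keys: "\<exists>k. T0 q = Key k" if "q \<in> Aset h T0 j" for q
    proof -
      have "T0 q \<noteq> Free" using that by (simp add: Aset_def)
      moreover have "\<not> is_tomb (T0 q)" using nt by (simp add: no_tombstones_def)
      ultimately show ?thesis by (cases "T0 q") auto
    qed
    have kinj: "inj_on (\<lambda>q. slot_key (T0 q)) (Aset h T0 j)"
    proof (rule inj_onI)
      fix p q assume "p \<in> Aset h T0 j" "q \<in> Aset h T0 j" "slot_key (T0 p) = slot_key (T0 q)"
      then show "p = q" using keys valid_dist[OF V] by (metis slot_key.simps(1))
    qed
    have kmap: "(\<lambda>q. slot_key (T0 q)) ` Aset h T0 j \<subseteq> {k\<in>Kt T0 ops 0. h k = j}"
    proof
      fix x assume "x \<in> (\<lambda>q. slot_key (T0 q)) ` Aset h T0 j"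
      then obtain q where qA: "q \<in> Aset h T0 j" and x: "x = slot_key (T0 q)" by blast
      obtain k where k: "T0 q = Key k" using keys[OF qA] by blast
      show "x \<in> {k\<in>Kt T0 ops 0. h k = j}" using k x qA by (auto simp: Aset_def Kt_def)
    qed
    have "finite {k\<in>Kt T0 ops 0. h k = j}" using fK by simp
    then show ?thesis using card_inj_on_le[OF kinj kmap] by simp
  qed
  have "\<forall>p k. T0 p = Key k \<longrightarrow> k \<in> Kt T0 ops 0" by (auto simp: Kt_def)
  then show ?thesis unfolding Inv_def using V fK cnt by blast
qed

lemma Inv_ins: assumes I: "Inv h T K" and nu: "\<forall>p. T p \<noteq> Key u"
  shows "Inv h (do_insert h T u) (insert u K)"
proof -
  have V: "valid_table h T" and KK: "\<forall>p k. T p = Key k \<longrightarrow> k \<in> K" and fK: "finite K"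
    and C: "\<And>j. card (Aset h T j) \<le> card {k\<in>K. h k = j}" using I by (auto simp: Inv_def)
  have "do_insert h T u p = Key k \<Longrightarrow> k \<in> insert u K" for p k
    using KK by (auto simp: do_insert_def split: if_splits)
  then show ?thesis unfolding Inv_def using ins_valid[OF V nu] ins_count[OF V nu KK fK C] fK by auto
qed

lemma Inv_del: assumes I: "Inv h T K" shows "Inv h (do_delete h T u) K"
proof -
  have V: "valid_table h T" and KK: "\<forall>p k. T p = Key k \<longrightarrow> k \<in> K" and fK: "finite K"
    and C: "\<forall>j. card (Aset h T j) \<le> card {k\<in>K. h k = j}" using I unfolding Inv_def by blast+
  have V': "valid_table h (do_delete h T u)" using V by (rule del_valid)
  have KK': "\<forall>p k. do_delete h T u p = Key k \<longrightarrow> k \<in> K"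
  proof (intro allI impI)
    fix p k assume "do_delete h T u p = Key k"
    then have "T p = Key k" by (rule del_key)
    then show "k \<in> K" using KK by blast
  qed
  have C': "\<forall>j. card (Aset h (do_delete h T u) j) \<le> card {k\<in>K. h k = j}"
    unfolding Aset_del by (rule C)
  show ?thesis unfolding Inv_def using V' KK' C' fK by blast
qed

lemma Inv_t: assumes L: "legal_window h T0 ops" shows "t \<le> length ops \<Longrightarrow> Inv h (state h T0 ops t) (Kt T0 ops t)"
proof (induction t)
  case 0
  have "state h T0 ops 0 = T0" by (simp add: state_def)
  moreover have "valid_table h T0" "no_tombstones T0" using L by (auto simp: legal_window_def)
  then have "Inv h T0 (Kt T0 ops 0)" by (rule Inv_0)
  ultimately show ?case by simp
next
  case (Suc t)
  then have t: "t < length ops" by simp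
  have I: "Inv h (state h T0 ops t) (Kt T0 ops t)" using Suc by simp
  show ?case
  proof (cases "ops ! t")
    case (Ins u)
    have nu: "\<forall>p. state h T0 ops t p \<noteq> Key u" using L t Ins by (simp add: legal_window_def)
    show ?thesis using Inv_ins[OF I nu] state_Suc[OF t] Kt_Suc[OF t] Ins by simp
  next
    case (Del u)
    show ?thesis using Inv_del[OF I] state_Suc[OF t] Kt_Suc[OF t] Del by simp
  next
    case (Qry u)
    show ?thesis using I state_Suc[OF t] Kt_Suc[OF t] Qry by simp
  qed
qed

lemma Pof_mono: assumes L: "legal_window h T0 ops" and tt: "t \<le> t'" "t' \<le> length ops"
  and P: "Pof h (state h T0 ops t) i j"
  shows "Pof h (state h T0 ops t') i j"
  using tt
proof (induction t' rule: dec_induct)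
  case base then show ?case using P by simp
next
  case (step n)
  then have n: "n < length ops" by simp
  have V: "valid_table h (state h T0 ops n)" using Inv_t[OF L, of n] n by (simp add: Inv_def)
  have IH: "Pof h (state h T0 ops n) i j" using step by simp
  show ?case using state_Suc[OF n] Pof_ins[OF V IH] Pof_del[OF IH] IH
    by (cases "ops ! n") auto
qed



theorem mainTheorem13:
  "\<exists>C::nat. \<forall>(h::'k \<Rightarrow> nat) (T0::'k table) ops t.
     legal_window h T0 ops \<and> t < length ops \<longrightarrow>
     (let T = state h T0 ops t;
          i = h (op_key (ops ! t));
          o_i = pos_offset h (state h T0 ops (length ops)) i;
          s_i = spillover h (window_keys T0 ops) i
      in (case ops ! t of
            Ins u \<Rightarrow> op_time h T (Ins u) \<le> C * (o_i + s_i + displacement h T u + 1)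
          | Del u \<Rightarrow> op_time h T (Del u) \<le> C * (o_i + s_i + 1)
          | Qry u \<Rightarrow> op_time h T (Qry u) \<le> C * (o_i + s_i + 1)))"
proof (intro exI[of _ 9] allI impI)
  fix h :: "'k \<Rightarrow> nat" and T0 :: "'k table" and ops t
  assume a: "legal_window h T0 ops \<and> t < length ops"
  then have L: "legal_window h T0 ops" and t: "t < length ops" by auto
  define T where "T = state h T0 ops t"
  define Te where "Te = state h T0 ops (length ops)"
  define W where "W = window_keys T0 ops"
  define i where "i = h (op_key (ops ! t))"
  define off where "off = pos_offset h Te i"
  define s where "s = spillover h W i"
  have IT: "Inv h T (Kt T0 ops t)" using Inv_t[OF L, of t] t T_def by simp
  have V: "valid_table h T" using IT by (simp add: Inv_def)
  have Ve: "valid_table h Te" using Inv_t[OF L, of "length ops"] Te_def by (simp add: Inv_def)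
  have V0: "valid_table h T0" using L by (simp add: legal_window_def)
  have fW: "finite W" unfolding W_def by (rule window_finite[OF V0])
  have C: "card (Aset h T j) \<le> card {k\<in>W. h k = j}" for j
  proof -
    have "card (Aset h T j) \<le> card {k\<in>Kt T0 ops t. h k = j}" using IT by (simp add: Inv_def)
    also have "\<dots> \<le> card {k\<in>W. h k = j}" using fW Kt_sub[of T0 ops t] W_def by (intro card_mono) auto
    finally show ?thesis .
  qed
  have O: "j \<le> i + off" if "Pof h T i j" "i \<le> j" for j
  proof -
    have "Pof h Te i j" using Pof_mono[OF L, of t "length ops"] t T_def Te_def that by simp
    then show ?thesis using Pof_le_offset[OF Ve _ \<open>i \<le> j\<close>] off_def by simp
  qed
  have ins: "op_time h T (Ins u) \<le> 9 * (off + s + displacement h T u + 1)" if "ops ! t = Ins u" for u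
  proof -
    have iu: "i = h u" using that i_def by simp
    have "insert_time h T u \<le> off + Ncnt h W (h u) (displacement h T u + 1) + 1"
      using insert_bound[OF V _ fW C] O iu by blast
    moreover have "Ncnt h W (h u) (displacement h T u + 1) \<le> 4 * spillover h W (h u) + 4 + 4 * (displacement h T u + 1)"
      by (rule spill_bound[OF fW])
    moreover have "s = spillover h W (h u)" using s_def iu by simp
    ultimately show ?thesis by simp
  qed
  have qry: "query_time h T u \<le> 9 * (off + s + 1)" if "op_key (ops ! t) = u" for u
  proof -
    have iu: "i = h u" using that i_def by simp
    have "query_time h T u \<le> off + Ncnt h W (h u) 1 + 1"
      using query_bound[OF V _ fW C] O iu by blast
    moreover have "Ncnt h W (h u) 1 \<le> 4 * spillover h W (h u) + 4 + 4 * 1"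
      by (rule spill_bound[OF fW])
    moreover have "s = spillover h W (h u)" using s_def iu by simp
    ultimately show ?thesis by simp
  qed
  show "let T = state h T0 ops t;
          i = h (op_key (ops ! t));
          o_i = pos_offset h (state h T0 ops (length ops)) i;
          s_i = spillover h (window_keys T0 ops) i
      in (case ops ! t of
            Ins u \<Rightarrow> op_time h T (Ins u) \<le> 9 * (o_i + s_i + displacement h T u + 1)
          | Del u \<Rightarrow> op_time h T (Del u) \<le> 9 * (o_i + s_i + 1)
          | Qry u \<Rightarrow> op_time h T (Qry u) \<le> 9 * (o_i + s_i + 1))"
  proof (cases "ops ! t")
    case (Ins u)
    then show ?thesis using ins[OF Ins] by (simp add: Let_def T_def Te_def W_def i_def off_def s_def)
  next
    case (Del u)
    then show ?thesis using qry[of u] by (simp add: Let_def T_def Te_def W_def i_def off_def s_def)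
  next
    case (Qry u)
    then show ?thesis using qry[of u] by (simp add: Let_def T_def Te_def W_def i_def off_def s_def)
  qed
qed


end
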